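(* Let $\alpha\in(0,1)$, $a_1,a_2\in\mathbb{R}$, and let $A$ be the $N\times N$ matrix defined below with $a_0=a_2$ (symmetric case). Let $R_N$ denote the set of points $(a_2,a_1)\in\mathbb{R}^2$ for which every eigenvalue $\lambda$ of $A$ (all of which are real) satisfies $1-2^{\alpha}<\lambda<1$. Then: (i) if $N\ge 2$ is even, $R_N$ is the open interior of the quadrilateral with vertices $Q_1=(0,1)$, $Q_2=\left(-2^{\alpha-2},\,2^{\alpha-1}+1-2^{\alpha}\right)$, $Q_3=(0,1-2^{\alpha})$, $Q_4=\left(2^{\alpha-2},\,1-2^{\alpha-1}\right)$; (ii) if $N\ge 3$ is odd, $R_N$ is the open interior of the quadrilateral with vertices $Q_1=(0,1)$, $Q_2'=\left(-\frac{2^{\alpha-1}}{1+\cos(\pi/N)},\,\frac{2^{\alpha}}{1+\cos(\pi/N)}+1-2^{\alpha}\right)$, $Q_3=(0,1-2^{\alpha})$, $Q_4'=\left(\frac{2^{\alpha-1}}{1+\cos(\pi/N)},\,1-\frac{2^{\alpha}}{1+\cos(\pi/N)}\right)$. (Here points are written in the $a_2a_1$-plane, first coordinate $a_2$, second coordinate $a_1$.) Consequently $R_N$ is the stable region of the zero solution of the linear fractional coupled map lattice with this $A$.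
   Context: Fractional-order linear coupled map lattice: for $\alpha\in(0,1)$, $X_{t+1}=X_0+\sum_{j=0}^{t}\frac{\Gamma(t-j+\alpha)}{\Gamma(\alpha)\Gamma(t-j+1)}(A-I)X_j$, $X_t\in\mathbb{R}^N$. Connectivity matrix for $N\ge 3$: $A$ is the $N\times N$ circulant matrix with $A_{k,k}=a_1$, $A_{k,k+1}=a_2$, $A_{k,k-1}=a_0$ (indices taken modulo $N$, i.e. periodic boundary conditions: $A_{1,N}=a_0$, $A_{N,1}=a_2$), all other entries $0$; for $N=2$, $A=\begin{pmatrix}a_1&a_0+a_2\\ a_0+a_2&a_1\end{pmatrix}$; for $N=1$, $A=(a_0+a_1+a_2)$. Stability criterion used to define "stable region": the zero solution is asymptotically stable exactly when every eigenvalue of $A$ lies in the open region enclosed by the curve $\beta(t)=1+e^{it}(1-e^{-it})^{\alpha}$, $0\le t\le 2\pi$ (principal branch), and a real number lies in this region iff it lies in $(1-2^{\alpha},1)$. *)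

theory Defs
  imports "HOL-Analysis.Analysis" "Jordan_Normal_Form.Char_Poly"
begin

text \<open>Connectivity matrix A of the coupled map lattice (0-based indices, periodic boundary).\<close>
definition cml_matrix :: "nat \<Rightarrow> real \<Rightarrow> real \<Rightarrow> real \<Rightarrow> real mat" where
  "cml_matrix N a0 a1 a2 =
     (if N = 1 then mat 1 1 (\<lambda>_. a0 + a1 + a2)
      else if N = 2 then mat 2 2 (\<lambda>(i,j). if i = j then a1 else a0 + a2)
      else mat N N (\<lambda>(i,j). if j = i then a1
                            else if j = (i + 1) mod N then a2
                            else if i = (j + 1) mod N then a0
                            else 0))"

definition region_R :: "real \<Rightarrow> nat \<Rightarrow> (real \<times> real) set" where
  "region_R \<alpha> N = {(a2, a1). \<forall>ev::complex.
      eigenvalue (map_mat complex_of_real (cml_matrix N a2 a1 a2)) ev \<longrightarrow>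
        ev \<in> \<real> \<and> 1 - 2 powr \<alpha> < Re ev \<and> Re ev < 1}"

end

theory Submission
  imports Defs
begin


lemma suc_mod: "(i::nat) < N \<Longrightarrow> (i+1) mod N = (if i+1 = N then 0 else i+1)"
  by (cases "i+1 = N") auto
lemma pred_mod: "(i::nat) < N \<Longrightarrow> (i+N-1) mod N = (if i = 0 then N-1 else i-1)"
proof (cases "i = 0")
  case True assume "i<N" then show ?thesis using True by (simp add: mod_less)
next
  case False assume "i<N" 
  then have "i+N-1 = (i-1) + N" using False by simp
  then have "(i+N-1) mod N = (i-1) mod N" by (metis mod_add_self2)
  then show ?thesis using False \<open>i<N\<close> by simp
qed

lemma suc_mod': "(i::nat) < N \<Longrightarrow> Suc i mod N = (if Suc i = N then 0 else Suc i)"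
  using suc_mod by simp
lemma pred_mod': "(i::nat) < N \<Longrightarrow> (i + N - Suc 0) mod N = (if i = 0 then N-1 else i-1)"
  using pred_mod by simp

lemma h1: assumes "(i::nat) < N" "j < N" shows "(i = (j+1) mod N) = (j = (i+N-1) mod N)"
  using assms by (auto simp: suc_mod' pred_mod' split: if_splits)

lemma distinct3: assumes "N \<ge> 3" "(i::nat) < N"
  shows "(i+1) mod N \<noteq> i" "(i+N-1) mod N \<noteq> i" "(i+1) mod N \<noteq> (i+N-1) mod N"
  using assms by (auto simp: suc_mod' pred_mod' split: if_splits)

lemma entry3:
  assumes "N \<ge> 3" "i < N" "j < N"
  shows "cml_matrix N a2 a1 a2 $$ (i,j) = (if j = i then a1 else 0) + (if j = (i+1) mod N then a2 else 0)
     + (if j = (i+N-1) mod N then a2 else 0)"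
proof -
  have "cml_matrix N a2 a1 a2 $$ (i,j) = (if j = i then a1
                            else if j = (i + 1) mod N then a2
                            else if j = (i+N-1) mod N then a2
                            else 0)"
    using assms h1[OF assms(2,3)] by (simp add: cml_matrix_def)
  then show ?thesis using distinct3[OF assms(1,2)] by (simp only:) auto
qed

lemma mv_formula:
  assumes N: "N \<ge> 2" and v: "v \<in> carrier_vec N" and i: "i < N"
  shows "(map_mat complex_of_real (cml_matrix N a2 a1 a2) *\<^sub>v v) $ i
     = of_real a1 * v$i + of_real a2 * v$((i+1) mod N) + of_real a2 * v$((i+N-1) mod N)"
proof (cases "N = 2")
  case True
  have dv: "dim_vec v = 2" using v True by auto
  have "(map_mat complex_of_real (cml_matrix N a2 a1 a2) *\<^sub>v v) $ i =
     (\<Sum>j<2. complex_of_real (if i = j then a1 else a2 + a2) * v $ j)"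
    using True i dv by (simp add: cml_matrix_def scalar_prod_def lessThan_atLeast0)
  also have "\<dots> = of_real a1 * v$i + of_real a2 * v$((i+1) mod N) + of_real a2 * v$((i+N-1) mod N)"
    using True i by (auto simp: numeral_2_eq_2 algebra_simps less_Suc_eq)
  finally show ?thesis .
next
  case False
  then have N3: "N \<ge> 3" using N by simp
  have dims: "dim_row (cml_matrix N a2 a1 a2) = N" "dim_col (cml_matrix N a2 a1 a2) = N"
    using N3 by (auto simp: cml_matrix_def)
  have dv: "dim_vec v = N" using v by auto
  have "(map_mat complex_of_real (cml_matrix N a2 a1 a2) *\<^sub>v v) $ i =
     (\<Sum>j<N. complex_of_real (cml_matrix N a2 a1 a2 $$ (i,j)) * v $ j)"
    using i dims dv by (simp add: scalar_prod_def lessThan_atLeast0)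
  also have "\<dots> = (\<Sum>j<N. (if j = i then of_real a1 * v$j else 0) + (if j = (i+1) mod N then of_real a2 * v$j else 0)
     + (if j = (i+N-1) mod N then of_real a2 * v$j else 0))"
    by (intro sum.cong refl) (simp add: entry3[OF N3 i] distrib_right)
  also have "\<dots> = of_real a1 * v$i + of_real a2 * v$((i+1) mod N) + of_real a2 * v$((i+N-1) mod N)"
    using i N3 by (simp add: sum.distrib)
  finally show ?thesis .
qed

lemma dim_cml: "N \<ge> 2 \<Longrightarrow> dim_row (cml_matrix N a0 a1 a2) = N"
  by (auto simp: cml_matrix_def)

definition om :: "nat \<Rightarrow> complex" where "om N = cis (2*pi / real N)"

lemma om_pow: "om N ^ m = cis (2*pi*real m / real N)"
proof -
  have "cis (2*pi/real N)^m = cis (real m * (2*pi/real N))" by (rule Complex.DeMoivre)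
  then show ?thesis by (simp add: om_def field_simps)
qed

lemma om_N: "N > 0 \<Longrightarrow> om N ^ N = 1"
  by (simp add: om_pow)

lemma pow_mod: assumes "(z::complex) ^ N = 1" shows "z ^ (m mod N) = z ^ m"
proof -
  have "z ^ m = z ^ (m div N * N + m mod N)" by simp
  also have "\<dots> = (z ^ N) ^ (m div N) * z ^ (m mod N)"
    by (simp only: power_add power_mult mult.commute)
  also have "\<dots> = z ^ (m mod N)" using assms by simp
  finally show ?thesis by simp
qed

lemma om_eq1: assumes "N \<ge> 1" shows "om N ^ m = 1 \<longleftrightarrow> N dvd m"
proof -
  have "om N ^ m = exp(2 * of_real pi * \<i> * of_nat m / of_nat N)"
    by (simp add: om_pow cis_conv_exp field_simps)
  then show ?thesis using complex_root_unity_eq_1[OF assms, of m] by simp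
qed

lemma shift1: assumes "(N::nat) > 0" shows "(\<Sum>j<N. f ((j+1) mod N)) = (\<Sum>j<N. f j)"
proof -
  obtain M where M: "N = Suc M" using assms by (cases N) auto
  have "(\<Sum>j<N. f ((j+1) mod N)) = (\<Sum>j<M. f ((j+1) mod N)) + f ((M+1) mod N)"
    by (simp add: M)
  also have "(\<Sum>j<M. f ((j+1) mod N)) = (\<Sum>j<M. f (Suc j))"
    by (intro sum.cong refl) (simp add: M)
  also have "f ((M+1) mod N) = f 0" by (simp add: M)
  also have "(\<Sum>j<M. f (Suc j)) + f 0 = (\<Sum>j<N. f j)"
    unfolding M sum.lessThan_Suc_shift by (simp add: add.commute)
  finally show ?thesis .
qed

lemma shift2: assumes "(N::nat) > 0" shows "(\<Sum>j<N. f ((j+N-1) mod N)) = (\<Sum>j<N. f j)"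
proof -
  have "(\<Sum>j<N. f ((j+N-1) mod N)) = (\<Sum>j<N. f ((((j+1) mod N)+N-1) mod N))"
    using shift1[OF assms, of "\<lambda>j. f ((j+N-1) mod N)"] by simp
  also have "\<dots> = (\<Sum>j<N. f j)"
  proof (intro sum.cong refl)
    fix j assume j: "j \<in> {..<N}"
    have "(j+1) mod N < N" using assms by simp
    then have "j = (((j+1) mod N)+N-1) mod N" using h1[of "(j+1) mod N" N j] j by simp
    then show "f ((((j+1) mod N)+N-1) mod N) = f j" by simp
  qed
  finally show ?thesis .
qed

definition mu :: "real \<Rightarrow> real \<Rightarrow> nat \<Rightarrow> complex \<Rightarrow> complex" where
  "mu a1 a2 N z = of_real a1 + of_real a2 * (z + z ^ (N-1))"

lemma key_identity:
  assumes N: "N \<ge> 2" and v: "v \<in> carrier_vec N"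
    and ev: "map_mat complex_of_real (cml_matrix N a2 a1 a2) *\<^sub>v v = lam \<cdot>\<^sub>v v"
    and z: "z ^ N = 1"
  shows "lam * (\<Sum>j<N. v$j * z^j) = mu a1 a2 N z * (\<Sum>j<N. v$j * z^j)"
proof -
  define S where "S = (\<Sum>j<N. v$j * z^j)"
  have N0: "N > 0" using N by simp
  have zz: "z * z^(N-1) = 1" using z N by (metis Suc_diff_1 N0 power_Suc)
  have "lam * S = (\<Sum>j<N. (lam \<cdot>\<^sub>v v)$j * z^j)"
    using v by (simp add: S_def sum_distrib_left mult.assoc)
  also have "\<dots> = (\<Sum>j<N. (of_real a1 * v$j + of_real a2 * v$((j+1) mod N) + of_real a2 * v$((j+N-1) mod N)) * z^j)"
    by (intro sum.cong refl) (simp add: ev[symmetric] mv_formula[OF N v])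
  also have "\<dots> = of_real a1 * S + of_real a2 * (\<Sum>j<N. v$((j+1) mod N) * z^j) + of_real a2 * (\<Sum>j<N. v$((j+N-1) mod N) * z^j)"
    by (simp add: S_def algebra_simps sum.distrib sum_distrib_left)
  also have "(\<Sum>j<N. v$((j+1) mod N) * z^j) = z^(N-1) * S"
  proof -
    have "z * (\<Sum>j<N. v$((j+1) mod N) * z^j) = (\<Sum>j<N. v$((j+1) mod N) * z^((j+1) mod N))"
      by (simp add: sum_distrib_left pow_mod[OF z] algebra_simps)
    also have "\<dots> = S" unfolding S_def by (rule shift1[OF N0, of "\<lambda>l. v$l * z^l"])
    finally have "z * (\<Sum>j<N. v$((j+1) mod N) * z^j) = S" .
    moreover have "(\<Sum>j<N. v$((j+1) mod N) * z^j) = (z^(N-1) * z) * (\<Sum>j<N. v$((j+1) mod N) * z^j)"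
      using zz by (simp add: mult.commute)
    ultimately show ?thesis by (simp add: mult.assoc)
  qed
  also have "(\<Sum>j<N. v$((j+N-1) mod N) * z^j) = z * S"
  proof -
    have "z^(N-1) * (\<Sum>j<N. v$((j+N-1) mod N) * z^j) = (\<Sum>j<N. v$((j+N-1) mod N) * z^((j+N-1) mod N))"
    proof -
      have pz: "z^((j+N-1) mod N) = z^(N-1) * z^j" for j
        using pow_mod[OF z, of "j+N-1"] N0 by (simp add: power_add[symmetric] add.commute)
      show ?thesis unfolding pz sum_distrib_left by (simp add: algebra_simps)
    qed
    also have "\<dots> = S" unfolding S_def by (rule shift2[OF N0, of "\<lambda>l. v$l * z^l"])
    finally have "z^(N-1) * (\<Sum>j<N. v$((j+N-1) mod N) * z^j) = S" .
    moreover have "(\<Sum>j<N. v$((j+N-1) mod N) * z^j) = (z * z^(N-1)) * (\<Sum>j<N. v$((j+N-1) mod N) * z^j)"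
      using zz by simp
    ultimately show ?thesis by (simp add: mult.assoc)
  qed
  finally show ?thesis unfolding S_def[symmetric] mu_def by (simp add: algebra_simps)
qed

lemma mu_cos: assumes N0: "N > 0"
  shows "mu a1 a2 N (om N ^ k) = of_real (a1 + 2*a2*cos(2*pi*real k/real N))"
proof -
  define x where "x = 2*pi*real k/real N"
  have z: "om N ^ k = cis x" by (simp add: om_pow x_def)
  have "om N ^ k * (om N ^ k)^(N-1) = (om N^k)^N"
    using N0 by (metis Suc_diff_1 power_Suc)
  also have "\<dots> = 1" using om_N[OF N0] by (metis power_mult mult.commute power_one)
  finally have "(om N ^ k)^(N-1) = inverse (cis x)" unfolding z
    by (metis cis_neq_zero inverse_unique)
  then have "(om N ^ k)^(N-1) = cis (-x)" by simp
  then have "om N ^ k + (om N ^ k)^(N-1) = of_real (2 * cos x)"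
    unfolding z by (simp add: complex_eq_iff)
  then show ?thesis unfolding mu_def x_def by simp
qed

lemma eig_exists:
  assumes N: "N \<ge> 2"
  shows "eigenvalue (map_mat complex_of_real (cml_matrix N a2 a1 a2)) (mu a1 a2 N (om N ^ k))"
proof -
  define z where "z = om N ^ k"
  have N0: "N > 0" using N by simp
  have zN: "z ^ N = 1" unfolding z_def using om_N[OF N0] by (metis power_mult mult.commute power_one)
  define v where "v = vec N (\<lambda>j. z^j)"
  have v: "v \<in> carrier_vec N" by (simp add: v_def)
  have "map_mat complex_of_real (cml_matrix N a2 a1 a2) *\<^sub>v v = mu a1 a2 N z \<cdot>\<^sub>v v"
  proof (rule eq_vecI)
    fix i assume i: "i < dim_vec (mu a1 a2 N z \<cdot>\<^sub>v v)"
    then have i: "i < N" by (simp add: v_def)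
    have p1: "z^((i+1) mod N) = z^i * z" using pow_mod[OF zN, of "i+1"] by simp
    have p2: "z^((i+N-1) mod N) = z^i * z^(N-1)" using pow_mod[OF zN, of "i+N-1"] N0
      by (simp add: power_add[symmetric])
    have "(map_mat complex_of_real (cml_matrix N a2 a1 a2) *\<^sub>v v) $ i
       = of_real a1 * z^i + of_real a2 * z^((i+1) mod N) + of_real a2 * z^((i+N-1) mod N)"
      using mv_formula[OF N v i] i N0 by (simp add: v_def)
    also have "\<dots> = mu a1 a2 N z * z^i" unfolding p1 p2 mu_def by (simp add: algebra_simps)
    finally show "(map_mat complex_of_real (cml_matrix N a2 a1 a2) *\<^sub>v v) $ i = (mu a1 a2 N z \<cdot>\<^sub>v v) $ i"
      using i by (simp add: v_def)
  qed (simp add: v_def dim_cml[OF N])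
  moreover have "v \<noteq> 0\<^sub>v N"
  proof
    assume "v = 0\<^sub>v N"
    then have "v $ 0 = 0" using N0 by simp
    then show False using N0 by (simp add: v_def)
  qed
  ultimately show ?thesis unfolding eigenvalue_def eigenvector_def z_def
    using v dim_cml[OF N, of a2 a1 a2] by auto
qed

lemma not_dvd_shift: assumes "(j::nat) < N" "l < N" "j \<noteq> l" shows "\<not> N dvd (j+N-l)"
proof -
  have "(j+N-l) mod N \<noteq> 0"
  proof (cases "l < j")
    case True
    then have "j+N-l = (j-l) + N" by simp
    then have "(j+N-l) mod N = (j-l) mod N" by (metis mod_add_self2)
    then show ?thesis using True assms by simp
  next
    case False
    then have "j+N-l < N" "j+N-l > 0" using assms by auto
    then show ?thesis by simp
  qed
  then show ?thesis by (simp add: dvd_eq_mod_eq_0)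
qed

lemma geo_root:
  assumes "(j::nat) < N" "l < N"
  shows "(\<Sum>k<N. (om N ^ (j+N-l))^k) = (if j = l then of_nat N else 0)"
proof (cases "j = l")
  case True
  then have "om N ^ (j+N-l) = 1" using assms om_N[of N] by simp
  then show ?thesis using True by simp
next
  case False
  have N1: "N \<ge> 1" using assms by simp
  define w where "w = om N ^ (j+N-l)"
  have w1: "w \<noteq> 1" unfolding w_def using om_eq1[OF N1] not_dvd_shift[OF assms False] by simp
  have N0: "N > 0" using N1 by simp
  have wN: "w ^ N = 1" unfolding w_def using om_N[OF N0] by (metis power_mult mult.commute power_one)
  have "(\<Sum>k<N. w^k) = (w^N - 1) / (w - 1)" using w1 by (rule geometric_sum)
  then show ?thesis using False wN unfolding w_def by simp
qed

lemma dft_inj: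
  assumes N1: "N \<ge> 1" and S: "\<And>k. k < N \<Longrightarrow> (\<Sum>j<N. f j * (om N ^ k)^j) = 0" and l: "l < N"
  shows "f l = (0::complex)"
proof -
  have "0 = (\<Sum>k<N. (\<Sum>j<N. f j * (om N ^ k)^j) * (om N ^ (N-l))^k)"
    using S by simp
  also have "\<dots> = (\<Sum>j<N. f j * (\<Sum>k<N. (om N ^ (j+N-l))^k))"
  proof -
    have t: "(om N ^ k)^j * (om N ^ (N-l))^k = (om N ^ (j+N-l))^k" for k j
    proof -
      have "(om N ^ k)^j * (om N ^ (N-l))^k = om N ^ (k*j + (N-l)*k)"
        by (simp add: power_mult[symmetric] power_add)
      also have "k*j + (N-l)*k = (j+N-l)*k" using l by (simp add: algebra_simps)
      finally show ?thesis by (simp add: power_mult)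
    qed
    have "(\<Sum>k<N. (\<Sum>j<N. f j * (om N ^ k)^j) * (om N ^ (N-l))^k) =
          (\<Sum>k<N. \<Sum>j<N. f j * ((om N ^ k)^j * (om N ^ (N-l))^k))"
      by (simp add: sum_distrib_right mult.assoc)
    also have "\<dots> = (\<Sum>j<N. \<Sum>k<N. f j * (om N ^ (j+N-l))^k)"
      unfolding t by (rule sum.swap)
    finally show ?thesis by (simp add: sum_distrib_left)
  qed
  also have "\<dots> = (\<Sum>j<N. (if j = l then f j * of_nat N else 0))"
    by (intro sum.cong refl) (simp add: geo_root l)
  also have "\<dots> = f l * of_nat N" using l by simp
  finally show ?thesis using N1 by simp
qed

lemma eig_form:
  assumes N: "N \<ge> 2"
    and ev: "eigenvalue (map_mat complex_of_real (cml_matrix N a2 a1 a2)) lam"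
  shows "\<exists>k<N. lam = mu a1 a2 N (om N ^ k)"
proof (rule ccontr)
  assume ne: "\<not> ?thesis"
  obtain v where v: "v \<in> carrier_vec N" "v \<noteq> 0\<^sub>v N"
    and e: "map_mat complex_of_real (cml_matrix N a2 a1 a2) *\<^sub>v v = lam \<cdot>\<^sub>v v"
    using ev dim_cml[OF N, of a2 a1 a2] unfolding eigenvalue_def eigenvector_def by auto
  have N0: "N > 0" using N by simp
  have S: "(\<Sum>j<N. v$j * (om N ^ k)^j) = 0" if k: "k < N" for k
  proof -
    have zN: "(om N ^ k) ^ N = 1" using om_N[OF N0] by (metis power_mult mult.commute power_one)
    have "lam \<noteq> mu a1 a2 N (om N ^ k)" using ne k by auto
    then show ?thesis using key_identity[OF N v(1) e zN] by simp
  qed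
  have "v = 0\<^sub>v N"
  proof (rule eq_vecI)
    fix l assume "l < dim_vec (0\<^sub>v N :: complex vec)"
    then have l: "l < N" by simp
    show "v $ l = 0\<^sub>v N $ l" using dft_inj[of N "\<lambda>j. v$j", OF _ S l] N0 l by simp
  qed (use v in simp)
  then show False using v by simp
qed

lemma eig_iff:
  assumes N: "N \<ge> 2"
  shows "eigenvalue (map_mat complex_of_real (cml_matrix N a2 a1 a2)) lam \<longleftrightarrow>
     (\<exists>k<N. lam = of_real (a1 + 2*a2*cos(2*pi*real k/real N)))"
proof
  have N0: "N > 0" using N by simp
  assume "eigenvalue (map_mat complex_of_real (cml_matrix N a2 a1 a2)) lam"
  then obtain k where "k < N" "lam = mu a1 a2 N (om N ^ k)" using eig_form[OF N] by blast
  then show "\<exists>k<N. lam = of_real (a1 + 2*a2*cos(2*pi*real k/real N))"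
    using mu_cos[OF N0, of a1 a2 k] by blast
next
  have N0: "N > 0" using N by simp
  assume "\<exists>k<N. lam = of_real (a1 + 2*a2*cos(2*pi*real k/real N))"
  then obtain k where "lam = of_real (a1 + 2*a2*cos(2*pi*real k/real N))" by blast
  then have "lam = mu a1 a2 N (om N ^ k)" using mu_cos[OF N0, of a1 a2 k] by simp
  then show "eigenvalue (map_mat complex_of_real (cml_matrix N a2 a1 a2)) lam"
    using eig_exists[OF N, of a2 a1 k] by simp
qed



lemma geom:
  fixes m d :: real
  assumes m: "m > 0" and d: "d > 0"
  shows "interior (convex hull {(0, 1), (- (d/(2*(1+m))), d/(1+m) + 1 - d), (0, 1 - d),
                               (d/(2*(1+m)), 1 - d/(1+m))})
       = {(a2, a1). 1 - d < a1 + 2*a2 \<and> a1 + 2*a2 < 1 \<and> 1 - d < a1 - 2*m*a2 \<and> a1 - 2*m*a2 < 1}"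
proof -
  define L where "L = 1 - d"
  have L1: "L < 1" using d by (simp add: L_def)
  have m1: "1 + m \<noteq> 0" using m by simp
  define g :: "real \<times> real \<Rightarrow> real \<times> real" where
    "g = (\<lambda>p. ((fst p - snd p)/(2*(1+m)), (m * fst p + snd p)/(1+m)))"
  define T :: "real \<times> real \<Rightarrow> real \<times> real" where
    "T = (\<lambda>p. (snd p + 2 * fst p, snd p - 2*m*fst p))"
  have gT: "g (T p) = p" for p
    using m1 by (cases p) (simp add: g_def T_def field_simps)
  have Tg: "T (g p) = p" for p
  proof (cases p)
    case (Pair a b)
    have "m*m \<ge> 0" by simp
    then have nz: "2 + (m * 4 + m * (m * 2)) \<noteq> 0" "4 + (m * 8 + m * (m * 4)) \<noteq> 0" using m by linarith+
    have "(m*a+b)/(1+m) + 2*((a-b)/(2*(1+m))) = a" using m1 nz by (simp add: field_simps)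
    moreover have "(m*a+b)/(1+m) - 2*m*((a-b)/(2*(1+m))) = b" using m1 nz by (simp add: field_simps)
    ultimately show ?thesis using Pair by (simp add: g_def T_def)
  qed
  have lin: "linear g"
    by (rule linearI) (auto simp: g_def add_divide_distrib diff_divide_distrib algebra_simps)
  have inj: "inj g" by (metis gT injI Tg)
  have pts: "{(0, 1), (- (d/(2*(1+m))), d/(1+m) + 1 - d), (0, 1 - d), (d/(2*(1+m)), 1 - d/(1+m))}
      = g ` ({L, 1} \<times> {L, 1})"
  proof -
    have "g (1,1) = (0,1)" "g (L,1) = (- (d/(2*(1+m))), d/(1+m) + 1 - d)" "g (L,L) = (0, 1-d)"
         "g (1,L) = (d/(2*(1+m)), 1 - d/(1+m))"
      using m1 by (simp_all add: g_def L_def field_simps)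
    then show ?thesis by auto
  qed
  have ch: "convex hull ({L, 1} \<times> {L, 1}) = {L..1} \<times> {L..1}"
    unfolding convex_hull_Times segment_convex_hull[symmetric] closed_segment_eq_real_ivl
    using L1 by simp
  have "interior (convex hull (g ` ({L, 1} \<times> {L, 1}))) = g ` ({L<..<1} \<times> {L<..<1})"
    unfolding convex_hull_linear_image[OF lin, symmetric] interior_injective_linear_image[OF lin inj]
      ch interior_Times by simp
  also have "\<dots> = {(a2, a1). L < a1 + 2*a2 \<and> a1 + 2*a2 < 1 \<and> L < a1 - 2*m*a2 \<and> a1 - 2*m*a2 < 1}"
  proof (rule Set.set_eqI)
    fix p
    have "p \<in> g ` ({L<..<1} \<times> {L<..<1}) \<longleftrightarrow> T p \<in> {L<..<1} \<times> {L<..<1}"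
    proof
      assume "p \<in> g ` ({L<..<1} \<times> {L<..<1})"
      then obtain q where "q \<in> {L<..<1} \<times> {L<..<1}" "p = g q" by blast
      then show "T p \<in> {L<..<1} \<times> {L<..<1}" using Tg by simp
    next
      assume "T p \<in> {L<..<1} \<times> {L<..<1}"
      then have "g (T p) \<in> g ` ({L<..<1} \<times> {L<..<1})" by (rule imageI)
      then show "p \<in> g ` ({L<..<1} \<times> {L<..<1})" using gT by simp
    qed
    then show "p \<in> g ` ({L<..<1} \<times> {L<..<1}) \<longleftrightarrow>
       p \<in> {(a2, a1). L < a1 + 2*a2 \<and> a1 + 2*a2 < 1 \<and> L < a1 - 2*m*a2 \<and> a1 - 2*m*a2 < 1}"
      by (cases p) (auto simp: T_def)
  qed
  finally show ?thesis unfolding pts L_def .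
qed



lemma region_eq:
  assumes N: "N \<ge> 2"
  shows "region_R \<alpha> N = {(a2, a1). \<forall>c\<in>(\<lambda>k. cos(2*pi*real k/real N)) ` {..<N}.
      1 - 2 powr \<alpha> < a1 + 2*a2*c \<and> a1 + 2*a2*c < 1}"
proof (rule Set.set_eqI)
  fix p :: "real \<times> real"
  obtain a2 a1 where p: "p = (a2, a1)" by (cases p)
  have "p \<in> region_R \<alpha> N \<longleftrightarrow> (\<forall>ev. (\<exists>k<N. ev = of_real (a1 + 2*a2*cos(2*pi*real k/real N))) \<longrightarrow>
        ev \<in> \<real> \<and> 1 - 2 powr \<alpha> < Re ev \<and> Re ev < 1)"
    unfolding region_R_def p using eig_iff[OF N, of a2 a1] by simp
  also have "\<dots> \<longleftrightarrow> (\<forall>k<N. 1 - 2 powr \<alpha> < a1 + 2*a2*cos(2*pi*real k/real N) \<and> a1 + 2*a2*cos(2*pi*real k/real N) < 1)"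
    by auto
  finally show "p \<in> region_R \<alpha> N \<longleftrightarrow> p \<in> {(a2, a1). \<forall>c\<in>(\<lambda>k. cos(2*pi*real k/real N)) ` {..<N}.
      1 - 2 powr \<alpha> < a1 + 2*a2*c \<and> a1 + 2*a2*c < 1}"
    unfolding p by auto
qed

lemma strip:
  fixes C :: "real set"
  assumes b: "\<And>c. c \<in> C \<Longrightarrow> -m \<le> c \<and> c \<le> 1" and c1: "1 \<in> C" and cm: "-m \<in> C"
  shows "(\<forall>c\<in>C. L < a1+2*a2*c \<and> a1+2*a2*c < 1) \<longleftrightarrow>
     (L < a1+2*a2 \<and> a1+2*a2 < 1 \<and> L < a1-2*m*a2 \<and> a1-2*m*a2 < 1)"
proof
  assume "\<forall>c\<in>C. L < a1+2*a2*c \<and> a1+2*a2*c < 1"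
  then show "L < a1+2*a2 \<and> a1+2*a2 < 1 \<and> L < a1-2*m*a2 \<and> a1-2*m*a2 < 1"
  proof -
    have "L < a1+2*a2*1 \<and> a1+2*a2*1 < 1" "L < a1+2*a2*(-m) \<and> a1+2*a2*(-m) < 1"
      using c1 cm \<open>\<forall>c\<in>C. _\<close> by blast+
    then show ?thesis by (simp add: algebra_simps)
  qed
next
  assume h: "L < a1+2*a2 \<and> a1+2*a2 < 1 \<and> L < a1-2*m*a2 \<and> a1-2*m*a2 < 1"
  show "\<forall>c\<in>C. L < a1+2*a2*c \<and> a1+2*a2*c < 1"
  proof
    fix c assume "c \<in> C"
    then have c: "-m \<le> c" "c \<le> 1" using b by auto
    show "L < a1+2*a2*c \<and> a1+2*a2*c < 1"
    proof (cases "a2 \<ge> 0")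
      case True
      have "a2 * c \<le> a2 * 1" using mult_left_mono[OF c(2) True] .
      moreover have "a2 * (-m) \<le> a2 * c" using mult_left_mono[OF c(1) True] .
      ultimately show ?thesis using h by (simp add: algebra_simps)
    next
      case False
      then have F: "a2 \<le> 0" by simp
      have "a2 * 1 \<le> a2 * c" using mult_left_mono_neg[OF c(2) F] .
      moreover have "a2 * c \<le> a2 * (-m)" using mult_left_mono_neg[OF c(1) F] .
      ultimately show ?thesis using h by (simp add: algebra_simps)
    qed
  qed
qed



lemma cos_even_facts:
  assumes "even N" "N \<ge> 2"
  defines "C \<equiv> (\<lambda>k. cos(2*pi*real k/real N)) ` {..<N}"
  shows "\<And>c. c \<in> C \<Longrightarrow> -1 \<le> c \<and> c \<le> 1" "1 \<in> C" "-1 \<in> C"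
proof -
  show "\<And>c. c \<in> C \<Longrightarrow> -1 \<le> c \<and> c \<le> 1" unfolding C_def by auto
  show "1 \<in> C" unfolding C_def using assms by (auto intro!: image_eqI[where x=0])
  obtain h where h: "N = 2*h" using assms by (auto elim: evenE)
  have "h < N" "h > 0" using h assms by auto
  moreover have "cos(2*pi*real h/real N) = -1" using h \<open>h>0\<close> by simp
  ultimately show "-1 \<in> C" unfolding C_def by (intro image_eqI[where x=h]) auto
qed

lemma cos_odd_lower:
  assumes "odd N" "N \<ge> 3" "k < N"
  shows "- cos (pi / real N) \<le> cos(2*pi*real k/real N)"
proof -
  have Np: "real N > 0" using assms by simp
  have key: "- cos (pi / real N) \<le> cos(2*pi*real j/real N)" if j: "2*j \<le> N - 1" for j
  proof -
    have "- cos (pi / real N) = cos (pi - pi/real N)" by simp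
    also have "\<dots> \<le> cos(2*pi*real j/real N)"
    proof (subst cos_mono_le_eq)
      have jj: "2 * real j \<le> real N - 1" using j assms by linarith
      have "2*pi*real j \<le> pi*(real N - 1)" using mult_left_mono[OF jj, of pi] pi_gt_zero
        by (simp add: algebra_simps)
      then show "2*pi*real j/real N \<le> pi - pi/real N" using Np by (simp add: field_simps)
    next
      show "0 \<le> pi - pi/real N" using Np assms by (simp add: field_simps)
      show "pi - pi/real N \<le> pi" using Np by simp
      show "0 \<le> 2*pi*real j/real N" using Np by simp
      have jj2: "2 * real j \<le> real N" using j assms by linarith
      have "2*pi*real j \<le> pi*real N" using mult_left_mono[OF jj2, of pi] pi_gt_zero
        by (simp add: algebra_simps)
      then show "2*pi*real j/real N \<le> pi" using Np by (simp add: field_simps)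
    qed
    finally show ?thesis .
  qed
  show ?thesis
  proof (cases "2*k \<le> N - 1")
    case True then show ?thesis by (rule key)
  next
    case False
    then have j: "2*(N-k) \<le> N - 1" using assms by (auto elim!: oddE)
    have "cos(2*pi*real k/real N) = cos(2*pi - 2*pi*real (N-k)/real N)"
      using assms Np by (simp add: of_nat_diff field_simps)
    also have "\<dots> = cos(2*pi*real (N-k)/real N)" by simp
    finally show ?thesis using key[OF j] by simp
  qed
qed

lemma cos_odd_facts:
  assumes "odd N" "N \<ge> 3"
  defines "C \<equiv> (\<lambda>k. cos(2*pi*real k/real N)) ` {..<N}"
  shows "\<And>c. c \<in> C \<Longrightarrow> - cos (pi / real N) \<le> c \<and> c \<le> 1" "1 \<in> C" "- cos (pi / real N) \<in> C"
    "cos (pi / real N) > 0"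
proof -
  show "\<And>c. c \<in> C \<Longrightarrow> - cos (pi / real N) \<le> c \<and> c \<le> 1" unfolding C_def using cos_odd_lower[OF assms(1,2)] by auto
  show "1 \<in> C" unfolding C_def using assms by (auto intro!: image_eqI[where x=0])
  obtain h where h: "N = 2*h+1" using assms by (auto elim: oddE)
  have "h < N" using h by auto
  moreover have "cos(2*pi*real h/real N) = - cos (pi / real N)"
  proof -
    have "2*pi*real h/real N = pi - pi / real N" using h by (simp add: field_simps)
    then show ?thesis by simp
  qed
  ultimately show "- cos (pi / real N) \<in> C" unfolding C_def by (intro image_eqI[where x=h]) auto
  have "pi / real N < pi / 2" using assms pi_gt_zero by (simp add: field_simps)
  moreover have "0 < pi / real N" using assms by simp
  ultimately show "cos (pi / real N) > 0" by (intro cos_gt_zero_pi) auto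
qed



theorem theorem3:
  fixes \<alpha> :: real and N :: nat
  assumes "0 < \<alpha>" and "\<alpha> < 1"
  shows "(even N \<and> N \<ge> 2 \<longrightarrow>
            region_R \<alpha> N = interior (convex hull
              {(0, 1), (- (2 powr (\<alpha> - 2)), 2 powr (\<alpha> - 1) + 1 - 2 powr \<alpha>),
               (0, 1 - 2 powr \<alpha>), (2 powr (\<alpha> - 2), 1 - 2 powr (\<alpha> - 1))}))
       \<and> (odd N \<and> N \<ge> 3 \<longrightarrow>
            region_R \<alpha> N = interior (convex hull
              {(0, 1),
               (- (2 powr (\<alpha> - 1) / (1 + cos (pi / real N))),
                  2 powr \<alpha> / (1 + cos (pi / real N)) + 1 - 2 powr \<alpha>),
               (0, 1 - 2 powr \<alpha>),
               (2 powr (\<alpha> - 1) / (1 + cos (pi / real N)),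
                  1 - 2 powr \<alpha> / (1 + cos (pi / real N)))}))"
proof (intro conjI impI)
  define d where "d = 2 powr \<alpha>"
  have d: "d > 0" by (simp add: d_def)
  have h1: "2 powr (\<alpha> - 1) = d / 2" by (simp add: d_def powr_diff)
  have h2: "2 powr (\<alpha> - 2) = d / 4" by (simp add: d_def powr_diff)
  {
    assume E: "even N \<and> N \<ge> 2"
    define C where "C = (\<lambda>k. cos(2*pi*real k/real N)) ` {..<N}"
    have "region_R \<alpha> N = {(a2, a1). \<forall>c\<in>C. 1 - d < a1 + 2*a2*c \<and> a1 + 2*a2*c < 1}"
      using region_eq[of N \<alpha>] E by (simp add: C_def d_def)
    also have "\<dots> = {(a2, a1). 1 - d < a1 + 2*a2 \<and> a1 + 2*a2 < 1 \<and> 1 - d < a1 - 2*1*a2 \<and> a1 - 2*1*a2 < 1}"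
      using strip[of C 1] cos_even_facts[of N] E unfolding C_def by auto
    also have "\<dots> = interior (convex hull {(0, 1), (- (d/(2*(1+1))), d/(1+1) + 1 - d), (0, 1 - d),
                               (d/(2*(1+1)), 1 - d/(1+1))})"
      using geom[of 1 d] d by simp
    also have "\<dots> = interior (convex hull
              {(0, 1), (- (2 powr (\<alpha> - 2)), 2 powr (\<alpha> - 1) + 1 - 2 powr \<alpha>),
               (0, 1 - 2 powr \<alpha>), (2 powr (\<alpha> - 2), 1 - 2 powr (\<alpha> - 1))})"
      unfolding h1 h2 d_def[symmetric] by simp
    finally show "region_R \<alpha> N = interior (convex hull
              {(0, 1), (- (2 powr (\<alpha> - 2)), 2 powr (\<alpha> - 1) + 1 - 2 powr \<alpha>),
               (0, 1 - 2 powr \<alpha>), (2 powr (\<alpha> - 2), 1 - 2 powr (\<alpha> - 1))})" .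
  }
  {
    assume O: "odd N \<and> N \<ge> 3"
    define C where "C = (\<lambda>k. cos(2*pi*real k/real N)) ` {..<N}"
    define m where "m = cos (pi / real N)"
    have m: "m > 0" using cos_odd_facts[of N] O by (simp add: m_def)
    have "region_R \<alpha> N = {(a2, a1). \<forall>c\<in>C. 1 - d < a1 + 2*a2*c \<and> a1 + 2*a2*c < 1}"
      using region_eq[of N \<alpha>] O by (simp add: C_def d_def)
    also have "\<dots> = {(a2, a1). 1 - d < a1 + 2*a2 \<and> a1 + 2*a2 < 1 \<and> 1 - d < a1 - 2*m*a2 \<and> a1 - 2*m*a2 < 1}"
      using strip[of C m] cos_odd_facts[of N] O unfolding C_def m_def by auto
    also have "\<dots> = interior (convex hull {(0, 1), (- (d/(2*(1+m))), d/(1+m) + 1 - d), (0, 1 - d),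
                               (d/(2*(1+m)), 1 - d/(1+m))})"
      using geom[of m d] d m by simp
    also have "\<dots> = interior (convex hull
              {(0, 1),
               (- (2 powr (\<alpha> - 1) / (1 + cos (pi / real N))),
                  2 powr \<alpha> / (1 + cos (pi / real N)) + 1 - 2 powr \<alpha>),
               (0, 1 - 2 powr \<alpha>),
               (2 powr (\<alpha> - 1) / (1 + cos (pi / real N)),
                  1 - 2 powr \<alpha> / (1 + cos (pi / real N)))})"
      unfolding h1 d_def[symmetric] m_def[symmetric] by simp
    finally show "region_R \<alpha> N = interior (convex hull
              {(0, 1),
               (- (2 powr (\<alpha> - 1) / (1 + cos (pi / real N))),
                  2 powr \<alpha> / (1 + cos (pi / real N)) + 1 - 2 powr \<alpha>),
               (0, 1 - 2 powr \<alpha>),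
               (2 powr (\<alpha> - 1) / (1 + cos (pi / real N)),
                  1 - 2 powr \<alpha> / (1 + cos (pi / real N)))})" .
  }
qed

end
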